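(* For all matroids $M$ and $N$ on disjoint finite sets, $$\mathrm{T}(M\mathbin{\Box} N)=\begin{cases} M\mathbin{\Box}\mathrm{T}N & \text{if } \rho(N)>0,\\ \mathrm{T}M\mathbin{\Box} N & \text{if } \rho(N)=0,\end{cases}\qquad \mathrm{L}(M\mathbin{\Box} N)=\begin{cases}\mathrm{L}M\mathbin{\Box} N & \text{if } \nu(M)>0,\\ M\mathbin{\Box}\mathrm{L}N & \text{if } \nu(M)=0.\end{cases}$$
   Context: For a matroid $M$ on $S$ write $\rho_M$ for rank, $\rho(M)=\rho_M(S)$, $\nu_M(A)=|A|-\rho_M(A)$, $\nu(M)=\nu_M(S)$, $\lambda_M(A)=\rho(M)-\rho_M(A)$. For matroids $M$ on $S$ and $N$ on $T$ with $S\cap T=\emptyset$, the free product $M\mathbin{\Box} N$ is the matroid on $S\cup T$ whose independent sets are those $A$ with $A\cap S$ independent in $M$ and $\lambda_M(A\cap S)\geq\nu_N(A\cap T)$. The truncation $\mathrm{T}M$ has as independent sets the independent sets $A$ of $M$ with $|A|\leq\max\{0,\rho(M)-1\}$; the Higgs lift $\mathrm{L}M$ has as independent sets the subsets $A$ of the ground set with $\nu_M(A)\leq 1$. *)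

theory Defs
  imports Main
begin

type_synonym 'a matroid = "'a set \<times> 'a set set"

definition ground :: "'a matroid \<Rightarrow> 'a set" where
  "ground M = fst M"

definition indeps :: "'a matroid \<Rightarrow> 'a set set" where
  "indeps M = snd M"

definition matroid :: "'a matroid \<Rightarrow> bool" where
  "matroid M \<longleftrightarrow> finite (ground M) \<and>
     (\<forall>A \<in> indeps M. A \<subseteq> ground M) \<and>
     {} \<in> indeps M \<and>
     (\<forall>A B. A \<in> indeps M \<and> B \<subseteq> A \<longrightarrow> B \<in> indeps M) \<and>
     (\<forall>A B. A \<in> indeps M \<and> B \<in> indeps M \<and> card A < card B \<longrightarrow>
        (\<exists>x \<in> B - A. insert x A \<in> indeps M))"

definition rk :: "'a matroid \<Rightarrow> 'a set \<Rightarrow> nat" where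
  "rk M A = Max (card ` {I. I \<in> indeps M \<and> I \<subseteq> A})"

definition rank :: "'a matroid \<Rightarrow> nat" where
  "rank M = rk M (ground M)"

definition nullity_set :: "'a matroid \<Rightarrow> 'a set \<Rightarrow> nat" where
  "nullity_set M A = card A - rk M A"

definition nullity :: "'a matroid \<Rightarrow> nat" where
  "nullity M = nullity_set M (ground M)"

definition corank_set :: "'a matroid \<Rightarrow> 'a set \<Rightarrow> nat" where
  "corank_set M A = rank M - rk M A"

definition free_product :: "'a matroid \<Rightarrow> 'a matroid \<Rightarrow> 'a matroid" where
  "free_product M N = (ground M \<union> ground N,
     {A. A \<subseteq> ground M \<union> ground N \<and> A \<inter> ground M \<in> indeps M \<and>
         corank_set M (A \<inter> ground M) \<ge> nullity_set N (A \<inter> ground N)})"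

definition truncation :: "'a matroid \<Rightarrow> 'a matroid" where
  "truncation M = (ground M,
     {A. A \<in> indeps M \<and> int (card A) \<le> max 0 (int (rank M) - 1)})"

definition higgs_lift :: "'a matroid \<Rightarrow> 'a matroid" where
  "higgs_lift M = (ground M, {A. A \<subseteq> ground M \<and> nullity_set M A \<le> 1})"

end

theory Submission
  imports Defs
begin

definition mwf :: "'a matroid \<Rightarrow> bool" where
  "mwf M \<longleftrightarrow> finite (ground M) \<and> (\<forall>A\<in>indeps M. A \<subseteq> ground M) \<and> {} \<in> indeps M"

lemma rk_fin:
  assumes "mwf M" shows "finite (card ` {I. I \<in> indeps M \<and> I \<subseteq> X})"
proof -
  have "{I. I \<in> indeps M \<and> I \<subseteq> X} \<subseteq> Pow (ground M)" using assms by (auto simp: mwf_def)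
  moreover have "finite (Pow (ground M))" using assms by (simp add: mwf_def)
  ultimately show ?thesis by (meson finite_imageI finite_subset)
qed

lemma rk_ge:
  assumes "mwf M" "I \<in> indeps M" "I \<subseteq> X" shows "card I \<le> rk M X"
  unfolding rk_def using rk_fin[OF assms(1)] assms(2,3) by (intro Max_ge) auto

lemma rk_obtain:
  assumes "mwf M" obtains I where "I \<in> indeps M" "I \<subseteq> X" "card I = rk M X"
proof -
  have ne: "card ` {I. I \<in> indeps M \<and> I \<subseteq> X} \<noteq> {}" using assms by (auto simp: mwf_def)
  have "rk M X \<in> card ` {I. I \<in> indeps M \<and> I \<subseteq> X}"
    unfolding rk_def using Max_in[OF rk_fin[OF assms] ne] .
  then show ?thesis using that by auto
qed

lemma indep_finite: "mwf M \<Longrightarrow> I \<in> indeps M \<Longrightarrow> finite I"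
  unfolding mwf_def by (meson finite_subset)

lemma indep_sub: "mwf M \<Longrightarrow> I \<in> indeps M \<Longrightarrow> I \<subseteq> ground M"
  unfolding mwf_def by blast

lemma rk_le_card:
  assumes "mwf M" "finite X" shows "rk M X \<le> card X"
  by (metis assms card_mono rk_obtain)

lemma rk_mono:
  assumes "mwf M" "X \<subseteq> Y" shows "rk M X \<le> rk M Y"
  by (metis assms order_trans rk_ge rk_obtain)

lemma rk_le_rank:
  assumes "mwf M" shows "rk M X \<le> rank M"
  unfolding rank_def by (metis assms indep_sub rk_ge rk_obtain)

lemma rk_indep:
  assumes "mwf M" "I \<in> indeps M" shows "rk M I = card I"
  by (meson assms indep_finite le_antisym order_refl rk_ge rk_le_card)

lemma card_le_rank:
  assumes "mwf M" "I \<in> indeps M" shows "card I \<le> rank M"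
  unfolding rank_def using assms indep_sub rk_ge by blast

lemma matroid_wf: "matroid M \<Longrightarrow> mwf M"
  unfolding matroid_def mwf_def by blast

lemma matroid_down: "matroid M \<Longrightarrow> I \<in> indeps M \<Longrightarrow> J \<subseteq> I \<Longrightarrow> J \<in> indeps M"
  unfolding matroid_def by blast

lemma fp_ground[simp]: "ground (free_product M N) = ground M \<union> ground N"
  by (simp add: free_product_def ground_def)

lemma fp_indep:
  assumes "mwf M"
  shows "A \<in> indeps (free_product M N) \<longleftrightarrow>
    A \<subseteq> ground M \<union> ground N \<and> A \<inter> ground M \<in> indeps M \<and>
    card (A \<inter> ground M) + nullity_set N (A \<inter> ground N) \<le> rank M"
proof -
  have "A \<inter> ground M \<in> indeps M \<Longrightarrow>
     (corank_set M (A \<inter> ground M) \<ge> nullity_set N (A \<inter> ground N)) \<longleftrightarrow>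
     card (A \<inter> ground M) + nullity_set N (A \<inter> ground N) \<le> rank M"
    using rk_indep[OF assms] card_le_rank[OF assms] unfolding corank_set_def
    by (metis add.commute le_diff_conv2)
  then show ?thesis unfolding free_product_def indeps_def ground_def by auto
qed

lemma mwf_fp:
  assumes "mwf M" "mwf N" shows "mwf (free_product M N)"
proof -
  have "{} \<in> indeps (free_product M N)"
    using assms unfolding fp_indep[OF assms(1)] by (auto simp: mwf_def nullity_set_def)
  moreover have "\<forall>A\<in>indeps (free_product M N). A \<subseteq> ground (free_product M N)"
    using fp_indep[OF assms(1)] by auto
  ultimately show ?thesis using assms by (auto simp: mwf_def)
qed

lemma rank_fp:
  assumes "mwf M" "mwf N" "ground M \<inter> ground N = {}"
  shows "rank (free_product M N) = rank M + rank N"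
proof (rule antisym)
  obtain I where I: "I \<in> indeps (free_product M N)" "I \<subseteq> ground (free_product M N)"
    "card I = rank (free_product M N)"
    using rk_obtain[OF mwf_fp[OF assms(1,2)]] unfolding rank_def by metis
  have I2: "I \<subseteq> ground M \<union> ground N" "card (I \<inter> ground M) + nullity_set N (I \<inter> ground N) \<le> rank M"
    using I(1) fp_indep[OF assms(1)] by auto
  have fin: "finite (ground M)" "finite (ground N)" using assms by (auto simp: mwf_def)
  have "card I = card (I \<inter> ground M) + card (I \<inter> ground N)"
  proof -
    have "I = (I \<inter> ground M) \<union> (I \<inter> ground N)" using I2 by auto
    then show ?thesis using assms(3) fin
      by (metis card_Un_disjoint disjoint_iff finite_Int inf_commute inf.left_idem IntE)
  qed
  moreover have "rk N (I \<inter> ground N) \<le> card (I \<inter> ground N)"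
    using rk_le_card[OF assms(2)] fin by simp
  moreover have "rk N (I \<inter> ground N) \<le> rank N" using rk_le_rank[OF assms(2)] .
  ultimately show "rank (free_product M N) \<le> rank M + rank N"
    using I(3) I2(2) unfolding nullity_set_def by linarith
next
  obtain BM where BM: "BM \<in> indeps M" "BM \<subseteq> ground M" "card BM = rank M"
    using rk_obtain[OF assms(1)] unfolding rank_def by metis
  obtain BN where BN: "BN \<in> indeps N" "BN \<subseteq> ground N" "card BN = rank N"
    using rk_obtain[OF assms(2)] unfolding rank_def by metis
  have e1: "(BM \<union> BN) \<inter> ground M = BM" "(BM \<union> BN) \<inter> ground N = BN"
    using BM BN assms(3) by auto
  have "BM \<union> BN \<in> indeps (free_product M N)"
    unfolding fp_indep[OF assms(1)] e1 nullity_set_def rk_indep[OF assms(2) BN(1)]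
    using BM BN by auto
  then have "card (BM \<union> BN) \<le> rank (free_product M N)"
    using card_le_rank[OF mwf_fp[OF assms(1,2)]] by blast
  moreover have "card (BM \<union> BN) = rank M + rank N"
    using BM BN assms(3) indep_finite[OF assms(1) BM(1)] indep_finite[OF assms(2) BN(1)]
    by (metis card_Un_disjoint disjoint_iff subsetD)
  ultimately show "rank M + rank N \<le> rank (free_product M N)" by simp
qed


lemma rk_fp_le:
  assumes "mwf M" "mwf N" "ground M \<inter> ground N = {}" "A \<subseteq> ground M \<union> ground N"
  shows "rk (free_product M N) A \<le>
     min (rk M (A \<inter> ground M) + card (A \<inter> ground N)) (rank M + rk N (A \<inter> ground N))"
proof -
  have fin: "finite (ground M)" "finite (ground N)" using assms by (auto simp: mwf_def)
  have cardsplit: "card X = card (X \<inter> ground M) + card (X \<inter> ground N)"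
    if "X \<subseteq> ground M \<union> ground N" for X
  proof -
    have e: "X = (X \<inter> ground M) \<union> (X \<inter> ground N)" using that by auto
    have "card ((X \<inter> ground M) \<union> (X \<inter> ground N)) = card (X \<inter> ground M) + card (X \<inter> ground N)"
      by (rule card_Un_disjoint) (use assms(3) fin in auto)
    then show ?thesis unfolding e[symmetric] .
  qed
  obtain I where I: "I \<in> indeps (free_product M N)" "I \<subseteq> A" "card I = rk (free_product M N) A"
    by (rule rk_obtain[OF mwf_fp[OF assms(1,2)]])
  have I2: "I \<subseteq> ground M \<union> ground N" "I \<inter> ground M \<in> indeps M"
    "card (I \<inter> ground M) + nullity_set N (I \<inter> ground N) \<le> rank M"
    using I(1) unfolding fp_indep[OF assms(1)] by blast+
  have c: "card I = card (I \<inter> ground M) + card (I \<inter> ground N)" using cardsplit[OF I2(1)] .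
  have a1: "card (I \<inter> ground M) \<le> rk M (A \<inter> ground M)"
    by (rule rk_ge[OF assms(1) I2(2)]) (use I(2) in blast)
  have a2: "card (I \<inter> ground N) \<le> card (A \<inter> ground N)"
    using I(2) fin by (intro card_mono) auto
  have a3: "rk N (I \<inter> ground N) \<le> rk N (A \<inter> ground N)"
    by (rule rk_mono[OF assms(2)]) (use I(2) in blast)
  have a4: "rk N (I \<inter> ground N) \<le> card (I \<inter> ground N)"
    by (rule rk_le_card[OF assms(2)]) (use fin in simp)
  show "rk (free_product M N) A \<le>
     min (rk M (A \<inter> ground M) + card (A \<inter> ground N)) (rank M + rk N (A \<inter> ground N))"
  proof -
    have "card I \<le> rk M (A \<inter> ground M) + card (A \<inter> ground N)" using c a1 a2 by linarith
    moreover have "card I \<le> rank M + rk N (A \<inter> ground N)"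
      using c a3 a4 I2(3) unfolding nullity_set_def by linarith
    ultimately show ?thesis using I(3) by simp
  qed
qed
lemma rk_fp_ge:
  assumes "mwf M" "mwf N" "ground M \<inter> ground N = {}" "A \<subseteq> ground M \<union> ground N"
  shows "min (rk M (A \<inter> ground M) + card (A \<inter> ground N)) (rank M + rk N (A \<inter> ground N))
      \<le> rk (free_product M N) A"
proof -
  have fin: "finite (ground M)" "finite (ground N)" using assms by (auto simp: mwf_def)
  define AS where "AS = A \<inter> ground M"
  define AT where "AT = A \<inter> ground N"
  obtain BS where BS: "BS \<in> indeps M" "BS \<subseteq> AS" "card BS = rk M AS"
    by (rule rk_obtain[OF assms(1)])
  obtain BT where BT: "BT \<in> indeps N" "BT \<subseteq> AT" "card BT = rk N AT"
    by (rule rk_obtain[OF assms(2)])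
  have finAT: "finite AT" using fin AT_def by simp
  have finBT: "finite BT" using finAT BT(2) finite_subset by blast
  define m where "m = min (rank M - rk M AS) (card AT - rk N AT)"
  have "card (AT - BT) = card AT - rk N AT" using BT finBT finAT by (simp add: card_Diff_subset)
  then have "m \<le> card (AT - BT)" unfolding m_def by simp
  then obtain E where E: "E \<subseteq> AT - BT" "card E = m" "finite E"
    by (rule obtain_subset_with_card_n)
  define I where "I = BS \<union> (BT \<union> E)"
  have sub1: "BS \<subseteq> ground M" using BS(2) AS_def by blast
  have sub2: "BT \<union> E \<subseteq> ground N" using BT(2) E(1) AT_def by blast
  have IS: "I \<inter> ground M = BS" using sub1 sub2 assms(3) unfolding I_def by blast
  have IT: "I \<inter> ground N = BT \<union> E" using sub1 sub2 assms(3) unfolding I_def by blast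
  have dj: "BT \<inter> E = {}" using E(1) by blast
  have cBTE: "card (BT \<union> E) = card BT + m" using card_Un_disjoint[OF finBT E(3) dj] E(2) by simp
  have rBTE: "card BT \<le> rk N (BT \<union> E)" by (rule rk_ge[OF assms(2) BT(1)]) blast
  have rkS: "rk M AS \<le> rank M" using rk_le_rank[OF assms(1)] .
  have Isub: "I \<subseteq> ground M \<union> ground N"
    using BS(2) BT(2) E(1) unfolding I_def AS_def AT_def by blast
  have nl: "card BS + (card (BT \<union> E) - rk N (BT \<union> E)) \<le> rank M"
  proof -
    have "card (BT \<union> E) - rk N (BT \<union> E) \<le> m" using cBTE rBTE by linarith
    moreover have "m \<le> rank M - rk M AS" unfolding m_def by simp
    moreover have "card BS + m \<le> rank M" using BS(3) rkS calculation(2) by linarith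
    ultimately show ?thesis by linarith
  qed
  have "I \<in> indeps (free_product M N)"
    unfolding fp_indep[OF assms(1)] IS IT nullity_set_def
    using Isub BS(1) nl by blast
  moreover have "I \<subseteq> A" using BS(2) BT(2) E(1) unfolding I_def AS_def AT_def by blast
  ultimately have "card I \<le> rk (free_product M N) A"
    by (rule rk_ge[OF mwf_fp[OF assms(1,2)]])
  moreover have "card I = rk M AS + rk N AT + m"
  proof -
    have dj2: "BS \<inter> (BT \<union> E) = {}" using sub1 sub2 assms(3) by blast
    have "card I = card BS + card (BT \<union> E)" unfolding I_def
      by (rule card_Un_disjoint[OF indep_finite[OF assms(1) BS(1)] _ dj2]) (use finBT E(3) in simp)
    then show ?thesis using cBTE BS(3) BT(3) by simp
  qed
  moreover have "rk N AT \<le> card AT" using rk_le_card[OF assms(2) finAT] .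
  ultimately show "min (rk M (A \<inter> ground M) + card (A \<inter> ground N)) (rank M + rk N (A \<inter> ground N))
      \<le> rk (free_product M N) A"
    unfolding AS_def[symmetric] AT_def[symmetric] using rkS by (auto simp: m_def min_def split: if_splits)
qed


definition trunc_k :: "'a matroid \<Rightarrow> nat \<Rightarrow> 'a matroid" where
  "trunc_k M k = (ground M, {A. A \<in> indeps M \<and> card A \<le> k})"

lemma truncation_eq: "truncation M = trunc_k M (rank M - 1)"
  unfolding truncation_def trunc_k_def by auto

lemma trunc_ground[simp]: "ground (trunc_k M k) = ground M"
  and trunc_indeps: "indeps (trunc_k M k) = {A. A \<in> indeps M \<and> card A \<le> k}"
  by (auto simp: trunc_k_def ground_def indeps_def)

lemma mwf_trunc: "mwf M \<Longrightarrow> mwf (trunc_k M k)"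
  unfolding mwf_def trunc_indeps by auto

lemma rk_trunc:
  assumes "matroid M" shows "rk (trunc_k M k) X = min (rk M X) k"
proof (rule antisym)
  have w: "mwf M" using matroid_wf[OF assms] .
  obtain J where J: "J \<in> indeps (trunc_k M k)" "J \<subseteq> X" "card J = rk (trunc_k M k) X"
    using rk_obtain[OF mwf_trunc[OF w]] by metis
  then show "rk (trunc_k M k) X \<le> min (rk M X) k"
    using rk_ge[OF w] unfolding trunc_indeps by fastforce
next
  have w: "mwf M" using matroid_wf[OF assms] .
  obtain I where I: "I \<in> indeps M" "I \<subseteq> X" "card I = rk M X"
    using rk_obtain[OF w] by metis
  obtain J where J: "J \<subseteq> I" "card J = min (rk M X) k" "finite J"
    using obtain_subset_with_card_n[of "min (rk M X) k" I] I by (metis min.cobounded1)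
  have "J \<in> indeps (trunc_k M k)" unfolding trunc_indeps
    using matroid_down[OF assms I(1) J(1)] J by auto
  then show "min (rk M X) k \<le> rk (trunc_k M k) X"
    using rk_ge[OF mwf_trunc[OF w]] J I by (metis order_trans)
qed

lemma rank_trunc: "matroid M \<Longrightarrow> rank (trunc_k M k) = min (rank M) k"
  unfolding rank_def using rk_trunc by simp

lemma higgs_ground[simp]: "ground (higgs_lift M) = ground M"
  and higgs_indeps: "indeps (higgs_lift M) = {A. A \<subseteq> ground M \<and> nullity_set M A \<le> 1}"
  by (auto simp: higgs_lift_def ground_def indeps_def)

lemma mwf_higgs: "mwf M \<Longrightarrow> mwf (higgs_lift M)"
  unfolding mwf_def higgs_indeps nullity_set_def by auto

lemma rk_higgs:
  assumes "matroid M" "X \<subseteq> ground M"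
  shows "rk (higgs_lift M) X = min (rk M X + 1) (card X)"
proof (rule antisym)
  have w: "mwf M" using matroid_wf[OF assms(1)] .
  have finX: "finite X" using w assms(2) by (auto simp: mwf_def intro: finite_subset)
  obtain J where J: "J \<in> indeps (higgs_lift M)" "J \<subseteq> X" "card J = rk (higgs_lift M) X"
    using rk_obtain[OF mwf_higgs[OF w]] by metis
  have "rk M J \<le> rk M X" using rk_mono[OF w J(2)] .
  moreover have "card J \<le> card X" using J(2) finX card_mono by blast
  ultimately show "rk (higgs_lift M) X \<le> min (rk M X + 1) (card X)"
    using J unfolding higgs_indeps nullity_set_def by auto
next
  have w: "mwf M" using matroid_wf[OF assms(1)] .
  have finX: "finite X" using w assms(2) by (auto simp: mwf_def intro: finite_subset)
  obtain B where B: "B \<in> indeps M" "B \<subseteq> X" "card B = rk M X"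
    using rk_obtain[OF w] by metis
  have finB: "finite B" using finX B(2) finite_subset by blast
  show "min (rk M X + 1) (card X) \<le> rk (higgs_lift M) X"
  proof (cases "B = X")
    case True
    have "X \<in> indeps (higgs_lift M)" unfolding higgs_indeps nullity_set_def
      using True B assms(2) by auto
    then show ?thesis using rk_ge[OF mwf_higgs[OF w]] by fastforce
  next
    case False
    then obtain x where x: "x \<in> X" "x \<notin> B" using B(2) by blast
    have c: "card (insert x B) = rk M X + 1" using x finB B by simp
    have "card B \<le> rk M (insert x B)" using rk_ge[OF w B(1)] by blast
    then have "insert x B \<in> indeps (higgs_lift M)" unfolding higgs_indeps nullity_set_def
      using c B x assms(2) by auto
    then have "card (insert x B) \<le> rk (higgs_lift M) X"
      using rk_ge[OF mwf_higgs[OF w]] x B by (meson insert_subset)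
    then show ?thesis using c by linarith
  qed
qed


lemma rk_fp:
  assumes "mwf M" "mwf N" "ground M \<inter> ground N = {}" "A \<subseteq> ground M \<union> ground N"
  shows "rk (free_product M N) A =
     min (rk M (A \<inter> ground M) + card (A \<inter> ground N)) (rank M + rk N (A \<inter> ground N))"
  using rk_fp_ge[OF assms] rk_fp_le[OF assms] by (rule antisym[rotated])

lemma cardsplit:
  assumes "finite S" "finite T" "S \<inter> T = {}" "X \<subseteq> S \<union> T"
  shows "card X = card (X \<inter> S) + card (X \<inter> T)"
proof -
  have e: "X = (X \<inter> S) \<union> (X \<inter> T)" using assms(4) by auto
  have "card ((X \<inter> S) \<union> (X \<inter> T)) = card (X \<inter> S) + card (X \<inter> T)"
    by (rule card_Un_disjoint) (use assms in auto)
  then show ?thesis unfolding e[symmetric] .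
qed

lemma meqI: "ground X = ground Y \<Longrightarrow> indeps X = indeps Y \<Longrightarrow> X = Y"
  unfolding ground_def indeps_def by (simp add: prod_eq_iff)


theorem proposition5p4:
  fixes M N :: "'a matroid"
  assumes "matroid M" and "matroid N"
    and "ground M \<inter> ground N = {}"
  shows "(truncation (free_product M N) =
           (if rank N > 0 then free_product M (truncation N)
            else free_product (truncation M) N)) \<and>
         (higgs_lift (free_product M N) =
           (if nullity M > 0 then free_product (higgs_lift M) N
            else free_product M (higgs_lift N)))"
proof -
  define S where "S = ground M"
  define T where "T = ground N"
  have wM: "mwf M" and wN: "mwf N" using matroid_wf[OF assms(1)] matroid_wf[OF assms(2)] by auto
  have fin: "finite S" "finite T" using wM wN by (auto simp: mwf_def S_def T_def)
  have dj: "S \<inter> T = {}" using assms(3) S_def T_def by simp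
  have rkfp: "rank (free_product M N) = rank M + rank N" using rank_fp[OF wM wN assms(3)] .
  have rNT: "rk N X \<le> card X" if "X \<subseteq> T" for X
    by (rule rk_le_card[OF wN]) (use that fin finite_subset in blast)
  have rMS: "rk M X \<le> card X" if "X \<subseteq> S" for X
    by (rule rk_le_card[OF wM]) (use that fin finite_subset in blast)
  have rNr: "rk N X \<le> rank N" for X by (rule rk_le_rank[OF wN])
  have cA: "card A = card (A \<inter> S) + card (A \<inter> T)" if "A \<subseteq> S \<union> T" for A
    by (rule cardsplit[OF fin dj that])
  have P1: "truncation (free_product M N) =
           (if rank N > 0 then free_product M (truncation N)
            else free_product (truncation M) N)"
  proof (cases "rank N > 0")
    case True
    have "indeps (truncation (free_product M N)) = indeps (free_product M (truncation N))"
    proof (intro set_eqI)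
      fix A
      show "A \<in> indeps (truncation (free_product M N)) \<longleftrightarrow> A \<in> indeps (free_product M (truncation N))"
      proof (cases "A \<subseteq> S \<union> T")
        case False
        then show ?thesis unfolding truncation_eq trunc_indeps fp_indep[OF wM] S_def T_def by simp
      next
        case AST: True
        have h1: "rk N (A \<inter> T) \<le> card (A \<inter> T)" using rNT by blast
        have h2: "rk N (A \<inter> T) \<le> rank N" using rNr .
        have h3: "card A = card (A \<inter> S) + card (A \<inter> T)" using cA AST .
        show ?thesis unfolding truncation_eq trunc_indeps fp_indep[OF wM] rkfp rk_trunc[OF assms(2)]
          nullity_set_def trunc_ground S_def[symmetric] T_def[symmetric]
          using AST h1 h2 h3 True by auto
      qed
    qed
    then show ?thesis using True unfolding truncation_eq by (auto intro!: meqI)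
  next
    case False
    then have RN: "rank N = 0" by simp
    have wT: "mwf (trunc_k M (rank M - 1))" using mwf_trunc[OF wM] .
    have "indeps (truncation (free_product M N)) = indeps (free_product (truncation M) N)"
    proof (intro set_eqI)
      fix A
      show "A \<in> indeps (truncation (free_product M N)) \<longleftrightarrow> A \<in> indeps (free_product (truncation M) N)"
      proof (cases "A \<subseteq> S \<union> T")
        case False
        then show ?thesis unfolding truncation_eq trunc_indeps fp_indep[OF wM] fp_indep[OF wT]
          S_def T_def by simp
      next
        case AST: True
        have h2: "rk N (A \<inter> T) = 0" using rNr[of "A \<inter> T"] RN by simp
        have h3: "card A = card (A \<inter> S) + card (A \<inter> T)" using cA AST .
        show ?thesis unfolding truncation_eq trunc_indeps fp_indep[OF wM] fp_indep[OF wT] rkfp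
          rank_trunc[OF assms(1)]
          nullity_set_def trunc_ground S_def[symmetric] T_def[symmetric]
          using AST h2 h3 RN by auto
      qed
    qed
    then show ?thesis using False unfolding truncation_eq by (auto intro!: meqI)
  qed
  have P2: "higgs_lift (free_product M N) =
           (if nullity M > 0 then free_product (higgs_lift M) N
            else free_product M (higgs_lift N))"
  proof (cases "nullity M > 0")
    case True
    have wL: "mwf (higgs_lift M)" using mwf_higgs[OF wM] .
    have rL: "rank (higgs_lift M) = rank M + 1"
      using rk_higgs[OF assms(1), of S] True unfolding rank_def nullity_def nullity_set_def S_def
      by simp
    have "indeps (higgs_lift (free_product M N)) = indeps (free_product (higgs_lift M) N)"
    proof (intro set_eqI)
      fix A
      show "A \<in> indeps (higgs_lift (free_product M N)) \<longleftrightarrow> A \<in> indeps (free_product (higgs_lift M) N)"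
      proof (cases "A \<subseteq> S \<union> T")
        case False
        then show ?thesis unfolding higgs_indeps fp_indep[OF wL] S_def T_def by simp
      next
        case AST: True
        have h1: "rk N (A \<inter> T) \<le> card (A \<inter> T)" using rNT by blast
        have h1': "rk M (A \<inter> S) \<le> card (A \<inter> S)" using rMS by blast
        have h3: "card A = card (A \<inter> S) + card (A \<inter> T)" using cA AST .
        have h4: "rk (free_product M N) A = min (rk M (A \<inter> S) + card (A \<inter> T)) (rank M + rk N (A \<inter> T))"
          using rk_fp[OF wM wN assms(3)] AST S_def T_def by simp
        show ?thesis unfolding higgs_indeps fp_indep[OF wL] rL
          nullity_set_def higgs_ground fp_ground S_def[symmetric] T_def[symmetric]
          using AST h1 h1' h3 h4 by (auto simp: min_def split: if_splits)
      qed
    qed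
    then show ?thesis using True by (auto intro!: meqI)
  next
    case False
    then have RS: "card S \<le> rank M" unfolding nullity_def nullity_set_def S_def rank_def by simp
    obtain B where B: "B \<in> indeps M" "B \<subseteq> S" "card B = rank M"
      using rk_obtain[OF wM] unfolding rank_def S_def by metis
    have "B = S" using card_subset_eq[OF fin(1) B(2)] B(3) RS card_mono[OF fin(1) B(2)] by simp
    then have Sind: "S \<in> indeps M" using B by simp
    have wL: "mwf (higgs_lift N)" using mwf_higgs[OF wN] .
    have "indeps (higgs_lift (free_product M N)) = indeps (free_product M (higgs_lift N))"
    proof (intro set_eqI)
      fix A
      show "A \<in> indeps (higgs_lift (free_product M N)) \<longleftrightarrow> A \<in> indeps (free_product M (higgs_lift N))"
      proof (cases "A \<subseteq> S \<union> T")
        case False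
        then show ?thesis unfolding higgs_indeps fp_indep[OF wM] S_def T_def by simp
      next
        case AST: True
        have AS: "A \<inter> S \<in> indeps M" using matroid_down[OF assms(1) Sind] by blast
        have h1: "rk N (A \<inter> T) \<le> card (A \<inter> T)" using rNT by blast
        have h1': "rk M (A \<inter> S) = card (A \<inter> S)" using rk_indep[OF wM AS] .
        have h3: "card A = card (A \<inter> S) + card (A \<inter> T)" using cA AST .
        have h5: "card (A \<inter> S) \<le> rank M" using RS card_mono[OF fin(1)] by (meson Int_lower2 order_trans)
        have h4: "rk (free_product M N) A = min (rk M (A \<inter> S) + card (A \<inter> T)) (rank M + rk N (A \<inter> T))"
          using rk_fp[OF wM wN assms(3)] AST S_def T_def by simp
        have h6: "rk (higgs_lift N) (A \<inter> T) = min (rk N (A \<inter> T) + 1) (card (A \<inter> T))"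
          using rk_higgs[OF assms(2)] T_def by simp
        show ?thesis unfolding higgs_indeps fp_indep[OF wM] h6
          nullity_set_def higgs_ground fp_ground S_def[symmetric] T_def[symmetric]
          using AST h1 h1' h3 h5 AS h4 by (auto simp: min_def split: if_splits)
      qed
    qed
    then show ?thesis using False by (auto intro!: meqI)
  qed
  show ?thesis using P1 P2 by blast
qed

end
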